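(* Let $n\ge2$, let $P$ be a partial $n$-Metric on a set $X$, let $x_o\in X$, and let $f:X\to X$ be non-expansive, i.e. $P(\langle f(x)\rangle^{n-1},f(y))\le P(\langle x\rangle^{n-1},y)$ for all $x,y\in X$. If $a$ is a special limit of the orbit $\{f^i(x_o)\}_{i\in\mathbb{N}}$, then $$P(\langle a\rangle^{n-1},f(a))=P(\langle a\rangle^n)\quad\text{and}\quad P(\langle f(a)\rangle^{n-1},a)\le P(\langle a\rangle^n).$$
   Context: Notation: $\langle a\rangle^k$ denotes the $k$-tuple $(a,\dots,a)$ inserted into an argument list; $f^0(x_o)=x_o$, $f^{i+1}(x_o)=f(f^i(x_o))$. A partial $n$-Metric on $X$ is a function $P:X^n\to\mathbb{R}$ such that for all $x_1,\dots,x_n,a\in X$: (1) $P(\langle x_1\rangle^n)\le P(\langle x_1\rangle^{n-1},x_2)$; (2) $P$ is invariant under permutations of its arguments; (3) $P(\langle x_1\rangle^{n-1},x_2)=P(\langle x_1\rangle^n)$ and $P(\langle x_2\rangle^{n-1},x_1)=P(\langle x_2\rangle^n)$ iff $x_1=x_2$; (4) $P(x_1,\dots,x_n)\le P(x_1,\dots,x_{n-1},a)+P(\langle a\rangle^{n-1},x_n)-P(\langle a\rangle^n)$. A sequence $\{x_i\}$ is Cauchy with central distance $r$ if for every $\epsilon>0$ there is $N$ with $|P(x_{i_1},\dots,x_{i_n})-r|<\epsilon$ for all $i_1,\dots,i_n>N$. A point $a$ is a limit of $\{x_i\}$ iff for every $\epsilon>0$ there is $N$ with $P(\langle a\rangle^{n-1},x_i)-P(\langle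 a\rangle^n)<\epsilon$ for all $i>N$. A special limit of a Cauchy sequence with central distance $r$ is a limit $a$ with $P(\langle a\rangle^n)=r$. *)

theory Defs
  imports Main "HOL-Library.Multiset" Complex_Main
begin

text \<open>A partial n-Metric on X, with P applied to argument lists of length n.
  The k-tuple (a,...,a) is  replicate k a.\<close>

definition partial_nmetric :: "nat \<Rightarrow> 'a set \<Rightarrow> ('a list \<Rightarrow> real) \<Rightarrow> bool" where
  "partial_nmetric n X P \<longleftrightarrow>
     (\<forall>x1\<in>X. \<forall>x2\<in>X.
        P (replicate n x1) \<le> P (replicate (n-1) x1 @ [x2])) \<and>
     (\<forall>xs ys. set xs \<subseteq> X \<longrightarrow> length xs = n \<longrightarrow> mset ys = mset xs \<longrightarrow> P xs = P ys) \<and>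
     (\<forall>x1\<in>X. \<forall>x2\<in>X.
        (P (replicate (n-1) x1 @ [x2]) = P (replicate n x1) \<and>
         P (replicate (n-1) x2 @ [x1]) = P (replicate n x2)) \<longleftrightarrow> x1 = x2) \<and>
     (\<forall>xs a xn. set xs \<subseteq> X \<longrightarrow> length xs = n - 1 \<longrightarrow> a \<in> X \<longrightarrow> xn \<in> X \<longrightarrow>
        P (xs @ [xn]) \<le> P (xs @ [a]) + P (replicate (n-1) a @ [xn]) - P (replicate n a))"

definition nmetric_limit :: "nat \<Rightarrow> ('a list \<Rightarrow> real) \<Rightarrow> (nat \<Rightarrow> 'a) \<Rightarrow> 'a \<Rightarrow> bool" where
  "nmetric_limit n P x a \<longleftrightarrow>
     (\<forall>\<epsilon>>0. \<exists>N. \<forall>i>N. P (replicate (n-1) a @ [x i]) - P (replicate n a) < \<epsilon>)"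

definition nmetric_cauchy :: "nat \<Rightarrow> ('a list \<Rightarrow> real) \<Rightarrow> (nat \<Rightarrow> 'a) \<Rightarrow> real \<Rightarrow> bool" where
  "nmetric_cauchy n P x r \<longleftrightarrow>
     (\<forall>\<epsilon>>0. \<exists>N. \<forall>is. length is = n \<longrightarrow> (\<forall>i\<in>set is. i > N) \<longrightarrow>
        \<bar>P (map x is) - r\<bar> < \<epsilon>)"

definition nmetric_special_limit :: "nat \<Rightarrow> ('a list \<Rightarrow> real) \<Rightarrow> (nat \<Rightarrow> 'a) \<Rightarrow> 'a \<Rightarrow> bool" where
  "nmetric_special_limit n P x a \<longleftrightarrow>
     (\<exists>r. nmetric_cauchy n P x r \<and> nmetric_limit n P x a \<and> P (replicate n a) = r)"

end

theory Submission
  imports Defs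
begin

lemma rep_lemma:
  assumes pm: "partial_nmetric n X P" and a: "a \<in> X" and y: "y \<in> X" and k: "k \<le> n" and n1: "n \<ge> 1"
  shows "P (replicate (n-k) a @ replicate k y) \<le> P (replicate n a)
          + real k * (P (replicate (n-1) a @ [y]) - P (replicate n a))"
  using k
proof (induction k)
  case 0 then show ?case by simp
next
  case (Suc k)
  have perm: "\<And>xs ys. set xs \<subseteq> X \<Longrightarrow> length xs = n \<Longrightarrow> mset ys = mset xs \<Longrightarrow> P xs = P ys"
    using pm unfolding partial_nmetric_def by blast
  have tri: "\<And>xs a xn. set xs \<subseteq> X \<Longrightarrow> length xs = n - 1 \<Longrightarrow> a \<in> X \<Longrightarrow> xn \<in> X \<Longrightarrow>
        P (xs @ [xn]) \<le> P (xs @ [a]) + P (replicate (n-1) a @ [xn]) - P (replicate n a)"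
    using pm unfolding partial_nmetric_def by blast
  define xs where "xs = replicate (n - Suc k) a @ replicate k y"
  have sx: "set xs \<subseteq> X" using a y by (auto simp: xs_def)
  have lx: "length xs = n - 1" using Suc.prems by (simp add: xs_def)
  have e1: "P (replicate (n - Suc k) a @ replicate (Suc k) y) = P (xs @ [y])"
  proof -
    have "P (xs @ [y]) = P (replicate (n - Suc k) a @ replicate (Suc k) y)"
      apply (rule perm) using sx y lx Suc.prems
      by (auto simp: xs_def replicate_append_same[symmetric])
    then show ?thesis by simp
  qed
  have e2: "P (xs @ [a]) = P (replicate (n - k) a @ replicate k y)"
  proof (rule perm)
    show "set (xs @ [a]) \<subseteq> X" using sx a by auto
    show "length (xs @ [a]) = n" using lx Suc.prems by simp
    have "n - k = Suc (n - Suc k)" using Suc.prems by simp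
    then show "mset (replicate (n - k) a @ replicate k y) = mset (xs @ [a])"
      by (simp add: xs_def)
  qed
  have "P (xs @ [y]) \<le> P (xs @ [a]) + P (replicate (n-1) a @ [y]) - P (replicate n a)"
    using tri sx lx a y by blast
  then show ?case using e1 e2 Suc by (simp add: algebra_simps)
qed

theorem lemma6p7:
  fixes n :: nat and X :: "'a set" and P :: "'a list \<Rightarrow> real"
    and f :: "'a \<Rightarrow> 'a" and xo a :: 'a
  assumes "n \<ge> 2"
    and "partial_nmetric n X P"
    and "xo \<in> X" and "a \<in> X"
    and "\<forall>x\<in>X. f x \<in> X"
    and "\<forall>x\<in>X. \<forall>y\<in>X. P (replicate (n-1) (f x) @ [f y]) \<le> P (replicate (n-1) x @ [y])"
    and "nmetric_special_limit n P (\<lambda>i. (f ^^ i) xo) a"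
  shows "P (replicate (n-1) a @ [f a]) = P (replicate n a)
       \<and> P (replicate (n-1) (f a) @ [a]) \<le> P (replicate n a)"
proof -
  note pm = assms(2)
  define x where "x = (\<lambda>i. (f ^^ i) xo)"
  define r where "r = P (replicate n a)"
  have xX: "x i \<in> X" for i
    by (induction i) (use assms(3,5) in \<open>auto simp: x_def\<close>)
  have xS: "x (Suc i) = f (x i)" for i by (simp add: x_def)
  have faX: "f a \<in> X" using assms(4,5) by blast
  have perm: "\<And>xs ys. set xs \<subseteq> X \<Longrightarrow> length xs = n \<Longrightarrow> mset ys = mset xs \<Longrightarrow> P xs = P ys"
    using pm unfolding partial_nmetric_def by blast
  have tri: "\<And>xs a xn. set xs \<subseteq> X \<Longrightarrow> length xs = n - 1 \<Longrightarrow> a \<in> X \<Longrightarrow> xn \<in> X \<Longrightarrow>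
        P (xs @ [xn]) \<le> P (xs @ [a]) + P (replicate (n-1) a @ [xn]) - P (replicate n a)"
    using pm unfolding partial_nmetric_def by blast
  have ax1: "\<And>x1 x2. x1 \<in> X \<Longrightarrow> x2 \<in> X \<Longrightarrow> P (replicate n x1) \<le> P (replicate (n-1) x1 @ [x2])"
    using pm unfolding partial_nmetric_def by blast
  have ne: "\<And>u v. u \<in> X \<Longrightarrow> v \<in> X \<Longrightarrow> P (replicate (n-1) (f u) @ [f v]) \<le> P (replicate (n-1) u @ [v])"
    using assms(6) by blast
  obtain r' where cau: "nmetric_cauchy n P x r'" and lim: "nmetric_limit n P x a" and rr: "r = r'"
    using assms(7) unfolding nmetric_special_limit_def x_def r_def by blast
  have rev: "P (replicate (n-1) y @ [a]) \<le> r + real (n-1) * (P (replicate (n-1) a @ [y]) - r)"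
    if y: "y \<in> X" for y
  proof -
    have "P (replicate (n-(n-1)) a @ replicate (n-1) y) \<le> r + real (n-1) * (P (replicate (n-1) a @ [y]) - r)"
      using rep_lemma[OF pm assms(4) y, of "n-1"] assms(1) by (simp add: r_def)
    moreover have "P (replicate (n-(n-1)) a @ replicate (n-1) y) = P (replicate (n-1) y @ [a])"
    proof (rule perm)
      show "set (replicate (n - (n - 1)) a @ replicate (n - 1) y) \<subseteq> X" using y assms(4) by auto
      show "length (replicate (n - (n - 1)) a @ replicate (n - 1) y) = n" using assms(1) by simp
      have "n - (n-1) = 1" using assms(1) by simp
      then show "mset (replicate (n - 1) y @ [a]) = mset (replicate (n - (n - 1)) a @ replicate (n - 1) y)"
        by simp
    qed
    ultimately show ?thesis by simp
  qed
  have key: "P (replicate (n-1) a @ [f a]) \<le> r + (real n + 2) * e \<and>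
             P (replicate (n-1) (f a) @ [a]) \<le> r + (real n + 2) * e" if e: "e > 0" for e
  proof -
    obtain N1 where N1: "\<And>i. i > N1 \<Longrightarrow> P (replicate (n-1) a @ [x i]) - r < e"
      using lim e unfolding nmetric_limit_def r_def by blast
    obtain N2 where N2: "\<And>is. length is = n \<Longrightarrow> (\<forall>i\<in>set is. i > N2) \<Longrightarrow> \<bar>P (map x is) - r\<bar> < e"
      using cau e rr unfolding nmetric_cauchy_def by blast
    define i where "i = N1 + N2 + 1"
    have l1: "P (replicate (n-1) a @ [x i]) - r < e" using N1 by (simp add: i_def)
    have l2: "P (replicate (n-1) a @ [x (Suc i)]) - r < e" using N1 by (simp add: i_def)
    have c2: "\<bar>P (replicate n (x (Suc i))) - r\<bar> < e"
      using N2[of "replicate n (Suc i)"] by (simp add: i_def map_replicate)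
    have g1: "P (replicate (n-1) a @ [x i]) \<ge> r" using ax1 assms(4) xX by (simp add: r_def)
    have rv: "P (replicate (n-1) (x i) @ [a]) \<le> r + real (n-1) * e"
    proof -
      have "real (n-1) * (P (replicate (n-1) a @ [x i]) - r) \<le> real (n-1) * e"
        using l1 by (intro mult_left_mono) auto
      then show ?thesis using rev[OF xX[of i]] by simp
    qed
    have rv': "P (replicate (n-1) (x (Suc i)) @ [f a]) \<le> r + real (n-1) * e"
      using ne[OF xX[of i] assms(4)] rv xS by simp
    have t1: "P (replicate (n-1) a @ [f a]) \<le> P (replicate (n-1) a @ [x (Suc i)])
         + P (replicate (n-1) (x (Suc i)) @ [f a]) - P (replicate n (x (Suc i)))"
      by (rule tri[of "replicate (n-1) a" "x (Suc i)" "f a"]) (use assms(4) xX faX in auto)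
    have rvS: "P (replicate (n-1) (x (Suc i)) @ [a]) \<le> r + real (n-1) * e"
    proof -
      have "real (n-1) * (P (replicate (n-1) a @ [x (Suc i)]) - r) \<le> real (n-1) * e"
        using l2 by (intro mult_left_mono) auto
      then show ?thesis using rev[OF xX[of "Suc i"]] by simp
    qed
    have t2: "P (replicate (n-1) (f a) @ [a]) \<le> P (replicate (n-1) (f a) @ [x (Suc i)])
         + P (replicate (n-1) (x (Suc i)) @ [a]) - P (replicate n (x (Suc i)))"
      by (rule tri[of "replicate (n-1) (f a)" "x (Suc i)" a]) (use assms(4) xX faX in auto)
    have t3: "P (replicate (n-1) (f a) @ [x (Suc i)]) \<le> P (replicate (n-1) a @ [x i])"
      using ne[OF assms(4) xX[of i]] xS by simp
    have "real (n-1) = real n - 1" using assms(1) by simp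
    then show ?thesis using t1 t2 t3 rv' rvS l1 l2 c2 e by (auto simp: algebra_simps abs_less_iff)
  qed
  have le1: "P (replicate (n-1) a @ [f a]) \<le> r"
  proof (rule field_le_epsilon)
    fix e :: real assume "e > 0"
    then have "e / (real n + 2) > 0" by simp
    from key[OF this] show "P (replicate (n-1) a @ [f a]) \<le> r + e" by simp
  qed
  have le2: "P (replicate (n-1) (f a) @ [a]) \<le> r"
  proof (rule field_le_epsilon)
    fix e :: real assume "e > 0"
    then have "e / (real n + 2) > 0" by simp
    from key[OF this] show "P (replicate (n-1) (f a) @ [a]) \<le> r + e" by simp
  qed
  have "r \<le> P (replicate (n-1) a @ [f a])" using ax1 assms(4) faX by (simp add: r_def)
  then show ?thesis using le1 le2 by (simp add: r_def)
qed

end
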